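(* Let $n\ge r\ge1$ be integers. For each $c>0$ define \[ \mathcal{L}_c:=\{X\in\mathbb{R}^{n\times r}:\ X_r\ge 0,\ \|X-I_{n\times r}\|_F\le c\,\|X_r-I_r\|_F\}. \] Then for each $c>0$ there exists $\delta>0$ such that for all $X\in\mathcal{L}_c$ with $\|X-I_{n\times r}\|_F\le\delta$, \[ \|X_r-I_r\|_F\le 2.1\sqrt{r}\,\|\sigma(X)-e\|. \]
   Context: For $X\in\mathbb{R}^{n\times r}$, $X_r$ denotes the $r\times r$ submatrix formed by the first $r$ rows of $X$, and $\sigma(X)\in\mathbb{R}^r$ is the vector of singular values of $X$ arranged in nonincreasing order. $I_{n\times r}$ is the $n\times r$ rectangular identity matrix (first $r$ rows form $I_r$, remaining rows zero), $e\in\mathbb{R}^r$ is the all-ones vector, $\|\cdot\|$ is the Euclidean norm, $\|\cdot\|_F$ the Frobenius norm, and $X_r\ge0$ means entrywise nonnegativity. *)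

theory Defs
  imports Complex_Main "Jordan_Normal_Form.Char_Poly"
begin

text \<open>Matrices X in R^{n x r} are Jordan_Normal_Form matrices in carrier_mat n r.\<close>

definition frob_norm :: "real mat \<Rightarrow> real" where
  "frob_norm A = sqrt (\<Sum>i<dim_row A. \<Sum>j<dim_col A. (A $$ (i,j))^2)"

definition top_block :: "nat \<Rightarrow> real mat \<Rightarrow> real mat" where
  "top_block r X = mat r (dim_col X) (\<lambda>(i,j). X $$ (i,j))"

definition rect_id :: "nat \<Rightarrow> nat \<Rightarrow> real mat" where
  "rect_id n r = mat n r (\<lambda>(i,j). if i = j then 1 else 0)"

definition entrywise_nonneg :: "real mat \<Rightarrow> bool" where
  "entrywise_nonneg A \<longleftrightarrow> (\<forall>i<dim_row A. \<forall>j<dim_col A. A $$ (i,j) \<ge> 0)"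

text \<open>Singular values sigma(X): square roots of the eigenvalues (with multiplicity,
  i.e. roots of the characteristic polynomial) of X^T X, in nonincreasing order.\<close>
definition singular_values :: "real mat \<Rightarrow> real list" where
  "singular_values X =
     rev (sorted_list_of_multiset (image_mset sqrt (proots (char_poly (transpose_mat X * X)))))"

definition vec_norm :: "real list \<Rightarrow> real" where
  "vec_norm v = sqrt (\<Sum>x\<leftarrow>v. x^2)"

definition sigma_dist :: "real mat \<Rightarrow> real" where
  "sigma_dist X = vec_norm (map (\<lambda>s. s - 1) (singular_values X))"

definition L_set :: "nat \<Rightarrow> nat \<Rightarrow> real \<Rightarrow> real mat set" where
  "L_set n r c = {X \<in> carrier_mat n r.
      entrywise_nonneg (top_block r X) \<and>
      frob_norm (X - rect_id n r) \<le> c * frob_norm (top_block r X - 1\<^sub>m r)}"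

end

theory Submission
  imports Defs "HOL-Analysis.L2_Norm" "Jordan_Normal_Form.Schur_Decomposition"
begin

lemma sym_real_eig_real:
  fixes M :: "real mat"
  assumes M: "M \<in> carrier_mat r r" and sym: "\<And>i j. i < r \<Longrightarrow> j < r \<Longrightarrow> M $$ (i,j) = M $$ (j,i)"
    and ev: "eigenvalue (map_mat complex_of_real M) a"
  shows "Im a = 0"
proof -
  from ev obtain v where v: "v \<in> carrier_vec r" "v \<noteq> 0\<^sub>v r"
     and eq: "map_mat complex_of_real M *\<^sub>v v = a \<cdot>\<^sub>v v"
    unfolding eigenvalue_def eigenvector_def using M by auto
  have row: "(\<Sum>j<r. complex_of_real (M $$ (i,j)) * v $ j) = a * v $ i" if i: "i < r" for i
  proof -
    have "(map_mat complex_of_real M *\<^sub>v v) $ i = (a \<cdot>\<^sub>v v) $ i" using eq by simp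
    thus ?thesis using i M v by (simp add: mult_mat_vec_def scalar_prod_def lessThan_atLeast0 ac_simps)
  qed
  define S where "S = (\<Sum>i<r. \<Sum>j<r. cnj (v $ i) * complex_of_real (M $$ (i,j)) * v $ j)"
  define T where "T = (\<Sum>i<r. cnj (v $ i) * v $ i)"
  have ST: "S = a * T"
  proof -
    have "S = (\<Sum>i<r. cnj (v $ i) * (\<Sum>j<r. complex_of_real (M $$ (i,j)) * v $ j))"
      unfolding S_def by (simp add: sum_distrib_left mult.assoc)
    also have "\<dots> = (\<Sum>i<r. cnj (v $ i) * (a * v $ i))" using row by simp
    finally show ?thesis unfolding T_def by (simp add: sum_distrib_left ac_simps)
  qed
  have "cnj S = (\<Sum>i<r. \<Sum>j<r. v $ i * complex_of_real (M $$ (i,j)) * cnj (v $ j))"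
    unfolding S_def by simp
  also have "\<dots> = (\<Sum>j<r. \<Sum>i<r. v $ i * complex_of_real (M $$ (i,j)) * cnj (v $ j))"
    by (rule sum.swap)
  also have "\<dots> = S" unfolding S_def
    by (intro sum.cong refl, simp add: sym ac_simps)
  finally have Sreal: "Im S = 0" using Im_complex_of_real
    by (metis cnj.sel(2) complex_cnj_cancel_iff complex_is_Real_iff Reals_cnj_iff neg_equal_0_iff_equal)
  have Tre: "T = complex_of_real (\<Sum>i<r. (cmod (v $ i))^2)"
    unfolding T_def of_real_sum complex_norm_square by (simp add: mult.commute)
  have "\<exists>i<r. v $ i \<noteq> 0"
  proof (rule ccontr)
    assume "\<not> ?thesis"
    hence "v = 0\<^sub>v r" using v by (intro eq_vecI) auto
    thus False using v by simp
  qed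
  then obtain i where i: "i < r" "v $ i \<noteq> 0" by auto
  have "(\<Sum>i<r. (cmod (v $ i))^2) \<ge> (cmod (v $ i))^2"
    by (rule member_le_sum) (use i in auto)
  moreover have "(cmod (v $ i))^2 > 0" using i by simp
  ultimately have Tpos: "(\<Sum>i<r. (cmod (v $ i))^2) > 0" by linarith
  have "Im S = Im a * (\<Sum>i<r. (cmod (v $ i))^2)" using ST Tre by simp
  thus ?thesis using Sreal Tpos by simp
qed
lemma map_poly_of_real_prod_lin:
  "map_poly complex_of_real (\<Prod>\<mu>\<leftarrow>xs. [:-\<mu>,1:]) = (\<Prod>\<mu>\<leftarrow>xs. [:-complex_of_real \<mu>,1:])"
proof (induct xs)
  case (Cons a xs)
  interpret m: map_poly_comm_ring_hom "complex_of_real" ..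
  have "map_poly complex_of_real ([:-a,1:] * (\<Prod>\<mu>\<leftarrow>xs. [:-\<mu>,1:])) = map_poly complex_of_real [:-a,1:] * map_poly complex_of_real (\<Prod>\<mu>\<leftarrow>xs. [:-\<mu>,1:])"
    by (rule m.hom_mult)
  thus ?case using Cons by simp
qed simp

lemma map_poly_of_real_inj:
  assumes "map_poly complex_of_real p = map_poly complex_of_real q"
  shows "p = q"
proof (rule poly_eqI)
  fix i
  have "coeff (map_poly complex_of_real p) i = coeff (map_poly complex_of_real q) i" using assms by simp
  thus "coeff p i = coeff q i" by (simp add: coeff_map_poly)
qed

lemma sym_real_split:
  fixes M :: "real mat"
  assumes M: "M \<in> carrier_mat r r" and sym: "\<And>i j. i < r \<Longrightarrow> j < r \<Longrightarrow> M $$ (i,j) = M $$ (j,i)"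
  shows "\<exists>mus. length mus = r \<and> char_poly M = (\<Prod>\<mu>\<leftarrow>mus. [:-\<mu>,1:])"
proof -
  let ?Mc = "map_mat complex_of_real M"
  have Mc: "?Mc \<in> carrier_mat r r" using M by simp
  obtain as where cA: "char_poly ?Mc = (\<Prod>a\<leftarrow>as. [:- a, 1:])" and len: "length as = r"
    using char_poly_factorized[OF Mc] by auto
  have re: "Im a = 0" if a: "a \<in> set as" for a
  proof -
    have "poly (char_poly ?Mc) a = 0" unfolding cA poly_prod_list
      using a by (auto simp: prod_list_zero_iff)
    hence "eigenvalue ?Mc a" using eigenvalue_root_char_poly[OF Mc] by simp
    thus ?thesis using sym_real_eig_real[OF M sym] by blast
  qed
  define mus where "mus = map Re as"
  have as_eq: "as = map (\<lambda>x. complex_of_real (Re x)) as"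
    by (rule map_idI[symmetric]) (use re in \<open>auto simp: complex_eq_iff\<close>)
  have "map_poly complex_of_real (char_poly M) = map_poly complex_of_real (\<Prod>\<mu>\<leftarrow>mus. [:-\<mu>,1:])"
    unfolding map_poly_of_real_prod_lin of_real_hom.char_poly_hom[OF M, symmetric] cA mus_def
    by (subst as_eq) (simp add: o_def)
  hence "char_poly M = (\<Prod>\<mu>\<leftarrow>mus. [:-\<mu>,1:])" by (rule map_poly_of_real_inj)
  thus ?thesis using len mus_def by (intro exI[of _ mus]) simp
qed

lemma proots_lin_prod: "proots (\<Prod>\<mu>\<leftarrow>mus. [:-\<mu>,1:]) = mset (mus :: real list)"
proof (induct mus)
  case (Cons a mus)
  have nz: "(\<Prod>\<mu>\<leftarrow>mus. [:-\<mu>,1:]) \<noteq> 0" by (auto simp: prod_list_zero_iff)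
  have "proots ([:-a,1:] * (\<Prod>\<mu>\<leftarrow>mus. [:-\<mu>,1:])) = proots [:-a,1:] + proots (\<Prod>\<mu>\<leftarrow>mus. [:-\<mu>,1:])"
    by (rule proots_mult) (use nz in auto)
  thus ?case using Cons by simp
qed simp
definition tr :: "real mat \<Rightarrow> real" where "tr A = (\<Sum>i<dim_row A. A $$ (i,i))"

lemma mult_entry:
  assumes "A \<in> carrier_mat n m" "B \<in> carrier_mat m k" "i < n" "j < k"
  shows "(A * B) $$ (i,j) = (\<Sum>l<m. A $$ (i,l) * B $$ (l,j))"
  using assms by (simp add: index_mult_mat scalar_prod_def lessThan_atLeast0)

lemma tr_comm:
  assumes A: "A \<in> carrier_mat n n" and B: "B \<in> carrier_mat n n"
  shows "tr (A * B) = tr (B * A)"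
proof -
  have "tr (A * B) = (\<Sum>i<n. (A * B) $$ (i,i))" unfolding tr_def using A by simp
  also have "\<dots> = (\<Sum>i<n. \<Sum>l<n. A $$ (i,l) * B $$ (l,i))"
    by (rule sum.cong[OF refl]) (rule mult_entry[OF A B]; simp)
  also have "\<dots> = (\<Sum>l<n. \<Sum>i<n. B $$ (l,i) * A $$ (i,l))"
    by (subst sum.swap) (simp add: mult.commute)
  also have "\<dots> = (\<Sum>i<n. (B * A) $$ (i,i))"
    by (rule sum.cong[OF refl]) (rule mult_entry[OF B A, symmetric]; simp)
  also have "\<dots> = tr (B * A)" unfolding tr_def using B by simp
  finally show ?thesis .
qed

lemma tr_sim:
  assumes P: "P \<in> carrier_mat n n" and D: "D \<in> carrier_mat n n" and Q: "Q \<in> carrier_mat n n"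
    and QP: "Q * P = 1\<^sub>m n"
  shows "tr (P * D * Q) = tr D"
proof -
  have "tr (P * D * Q) = tr (Q * (P * D))"
    by (rule tr_comm) (use P D Q in auto)
  also have "Q * (P * D) = (Q * P) * D" using P D Q by (simp add: assoc_mult_mat)
  also have "\<dots> = D" using QP D by simp
  finally show ?thesis .
qed

lemma upper_tri_sq_diag:
  fixes B :: "real mat"
  assumes B: "B \<in> carrier_mat n n" and ut: "upper_triangular B" and i: "i < n"
  shows "(B * B) $$ (i,i) = (B $$ (i,i))^2"
proof -
  have z: "B $$ (a,b) = 0" if "a < n" "b < a" for a b
    using ut B that unfolding upper_triangular_def by auto
  have "(B * B) $$ (i,i) = (\<Sum>l<n. B $$ (i,l) * B $$ (l,i))" by (rule mult_entry[OF B B i i])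
  also have "\<dots> = (\<Sum>l\<in>{i}. B $$ (i,l) * B $$ (l,i))"
  proof (rule sum.mono_neutral_right)
    show "\<forall>l\<in>{..<n} - {i}. B $$ (i, l) * B $$ (l, i) = 0"
    proof
      fix l assume l: "l \<in> {..<n} - {i}"
      hence ln: "l < n" "l \<noteq> i" by auto
      show "B $$ (i, l) * B $$ (l, i) = 0"
      proof (cases "l < i")
        case True thus ?thesis using z[OF i] by simp
      next
        case False hence "i < l" using ln by linarith
        thus ?thesis using z[OF ln(1)] by simp
      qed
    qed
  qed (use i in auto)
  also have "\<dots> = (B $$ (i,i))^2" by (simp add: power2_eq_square)
  finally show ?thesis .
qed

lemma eig_trace_identity:
  fixes M :: "real mat"
  assumes M: "M \<in> carrier_mat r r" and sym: "\<And>i j. i < r \<Longrightarrow> j < r \<Longrightarrow> M $$ (i,j) = M $$ (j,i)"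
    and cp: "char_poly M = (\<Prod>\<mu>\<leftarrow>mus. [:-\<mu>,1:])"
  shows "(\<Sum>\<mu>\<leftarrow>mus. (\<mu> - 1)^2) = (\<Sum>i<r. \<Sum>j<r. (M $$ (i,j) - (if i = j then 1 else 0))^2)"
proof -
  obtain B P Q where sd: "schur_decomposition M mus = (B,P,Q)" by (cases "schur_decomposition M mus") auto
  from schur_decomposition[OF M cp sd] have sw: "similar_mat_wit M B P Q" and ut: "upper_triangular B"
    and dg: "diag_mat B = mus" by auto
  from sw M have B: "B \<in> carrier_mat r r" and P: "P \<in> carrier_mat r r" and Q: "Q \<in> carrier_mat r r"
    and PQ: "P * Q = 1\<^sub>m r" and QP: "Q * P = 1\<^sub>m r" and MPBQ: "M = P * B * Q"
    unfolding similar_mat_wit_def Let_def by auto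
  have mus: "mus = map (\<lambda>i. B $$ (i,i)) [0..<r]" using dg B unfolding diag_mat_def by auto
  have trM: "tr M = tr B" using tr_sim[OF P B Q QP] MPBQ by simp
  have MM: "M * M = P * (B * B) * Q"
  proof -
    have "M * M = (P * B * Q) * (P * B * Q)" using MPBQ by simp
    also have "\<dots> = (P * B) * (Q * (P * B * Q))" by (rule assoc_mult_mat) (use P B Q in auto)
    also have "Q * (P * B * Q) = Q * (P * (B * Q))" using P B Q by (simp add: assoc_mult_mat)
    also have "\<dots> = (Q * P) * (B * Q)" by (rule assoc_mult_mat[symmetric]) (use P B Q in auto)
    also have "\<dots> = B * Q" using QP B Q by simp
    also have "(P * B) * (B * Q) = P * (B * (B * Q))" by (rule assoc_mult_mat) (use P B Q in auto)
    also have "B * (B * Q) = (B * B) * Q" by (rule assoc_mult_mat[symmetric]) (use P B Q in auto)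
    also have "P * ((B * B) * Q) = P * (B * B) * Q" by (rule assoc_mult_mat[symmetric]) (use P B Q in auto)
    finally show ?thesis .
  qed
  have BB: "B * B \<in> carrier_mat r r" using B by simp
  have trMM: "tr (M * M) = tr (B * B)" using tr_sim[OF P BB Q QP] MM by simp
  have L: "(\<Sum>\<mu>\<leftarrow>mus. (\<mu> - 1)^2) = tr (B * B) - 2 * tr B + r"
  proof -
    have "(\<Sum>\<mu>\<leftarrow>mus. (\<mu> - 1)^2) = (\<Sum>i<r. (B $$ (i,i) - 1)^2)"
      unfolding mus by (simp add: sum_list_sum_nth lessThan_atLeast0)
    also have "\<dots> = (\<Sum>i<r. (B * B) $$ (i,i) - 2 * B $$ (i,i) + 1)"
      by (intro sum.cong refl) (simp add: upper_tri_sq_diag[OF B ut] power2_eq_square algebra_simps)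
    also have "\<dots> = tr (B * B) - 2 * tr B + r"
      unfolding tr_def using B by (simp add: sum.distrib sum_subtractf sum_distrib_left)
    finally show ?thesis .
  qed
  have R: "(\<Sum>i<r. \<Sum>j<r. (M $$ (i,j) - (if i = j then 1 else 0))^2) = tr (M * M) - 2 * tr M + r"
  proof -
    have e: "(M $$ (i,j) - (if i = j then 1 else 0))^2 = M $$ (i,j) * M $$ (j,i) - (if i = j then 2 * M $$ (i,j) - 1 else 0)"
      if "i < r" "j < r" for i j using sym[OF that] by (auto simp: power2_eq_square algebra_simps)
    have "(\<Sum>i<r. \<Sum>j<r. (M $$ (i,j) - (if i = j then 1 else 0))^2)
       = (\<Sum>i<r. (\<Sum>j<r. M $$ (i,j) * M $$ (j,i)) - (2 * M $$ (i,i) - 1))"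
      by (intro sum.cong refl) (simp add: e sum_subtractf)
    also have "\<dots> = tr (M * M) - 2 * tr M + r"
    proof -
      have t1: "tr (M * M) = (\<Sum>i<r. \<Sum>j<r. M $$ (i,j) * M $$ (j,i))"
      proof -
        have "tr (M * M) = (\<Sum>i<r. (M * M) $$ (i,i))" unfolding tr_def using M by simp
        also have "\<dots> = (\<Sum>i<r. \<Sum>j<r. M $$ (i,j) * M $$ (j,i))"
          by (rule sum.cong[OF refl]) (rule mult_entry[OF M M]; simp)
        finally show ?thesis .
      qed
      have t2: "tr M = (\<Sum>i<r. M $$ (i,i))" unfolding tr_def using M by simp
      show ?thesis unfolding t1 t2 by (simp add: sum_subtractf sum_distrib_left)
    qed
    finally show ?thesis .
  qed
  show ?thesis using L R trM trMM by simp
qed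

definition dsq :: "nat \<Rightarrow> (nat \<Rightarrow> nat \<Rightarrow> real) \<Rightarrow> real" where
  "dsq r h = (\<Sum>i<r. \<Sum>j<r. (h i j)^2)"

lemma dsq_nonneg: "0 \<le> dsq r h" unfolding dsq_def by (intro sum_nonneg) auto

lemma L2_pair: "L2_set (\<lambda>(i,j). h i j) ({..<r} \<times> {..<r}) = sqrt (dsq r h)"
  unfolding L2_set_def dsq_def by (simp add: sum.cartesian_product case_prod_beta)

lemma dsq_tri: "sqrt (dsq r (\<lambda>i j. u i j + v i j)) \<le> sqrt (dsq r u) + sqrt (dsq r v)"
proof -
  have "sqrt (dsq r (\<lambda>i j. u i j + v i j)) = L2_set (\<lambda>(i,j). u i j + v i j) ({..<r} \<times> {..<r})"
    by (rule L2_pair[symmetric])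
  also have "\<dots> = L2_set (\<lambda>x. (\<lambda>(i,j). u i j) x + (\<lambda>(i,j). v i j) x) ({..<r} \<times> {..<r})"
    by (rule L2_set_cong) auto
  also have "\<dots> \<le> L2_set (\<lambda>(i,j). u i j) ({..<r} \<times> {..<r}) + L2_set (\<lambda>(i,j). v i j) ({..<r} \<times> {..<r})"
    by (rule L2_set_triangle_ineq)
  also have "\<dots> = sqrt (dsq r u) + sqrt (dsq r v)" by (simp only: L2_pair)
  finally show ?thesis .
qed

lemma dsq_swap: "dsq r (\<lambda>i j. h j i) = dsq r h"
  unfolding dsq_def by (rule sum.swap)

lemma dsq_neg: "dsq r (\<lambda>i j. - h i j) = dsq r h"
  unfolding dsq_def by simp

lemma dsq_sym_lower:
  assumes off: "\<And>i j. i < r \<Longrightarrow> j < r \<Longrightarrow> i \<noteq> j \<Longrightarrow> h i j \<ge> 0"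
  shows "2 * dsq r h \<le> dsq r (\<lambda>i j. h i j + h j i)"
proof -
  have "dsq r (\<lambda>i j. h i j + h j i) = dsq r h + dsq r (\<lambda>i j. h j i) + 2 * (\<Sum>i<r. \<Sum>j<r. h i j * h j i)"
    unfolding dsq_def by (simp add: power2_sum sum.distrib sum_distrib_left mult.assoc)
  moreover have "(\<Sum>i<r. \<Sum>j<r. h i j * h j i) \<ge> 0"
  proof (intro sum_nonneg)
    fix i j assume "i \<in> {..<r}" "j \<in> {..<r}"
    thus "0 \<le> h i j * h j i" using off[of i j] off[of j i] by (cases "i = j") auto
  qed
  ultimately show ?thesis using dsq_swap[of r h] by simp
qed

lemma dsq_gram:
  fixes F :: "nat \<Rightarrow> nat \<Rightarrow> real"
  shows "dsq r (\<lambda>i j. \<Sum>k<n. F k i * F k j) \<le> (\<Sum>k<n. \<Sum>j<r. (F k j)^2)^2"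
proof -
  define a where "a i = L2_set (\<lambda>k. F k i) {..<n}" for i
  have a2: "(a i)^2 = (\<Sum>k<n. (F k i)^2)" for i unfolding a_def L2_set_def by (simp add: sum_nonneg)
  have "(\<Sum>k<n. F k i * F k j)^2 \<le> (a i)^2 * (a j)^2" for i j
  proof -
    have "\<bar>\<Sum>k<n. F k i * F k j\<bar> \<le> (\<Sum>k<n. \<bar>F k i\<bar> * \<bar>F k j\<bar>)"
      by (rule order_trans[OF sum_abs]) (simp add: abs_mult)
    also have "\<dots> \<le> a i * a j" unfolding a_def by (rule L2_set_mult_ineq)
    finally have "\<bar>\<Sum>k<n. F k i * F k j\<bar> \<le> a i * a j" .
    hence "\<bar>\<Sum>k<n. F k i * F k j\<bar>^2 \<le> (a i * a j)^2"
      by (rule power_mono) simp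
    thus ?thesis by (simp add: power_mult_distrib)
  qed
  hence "dsq r (\<lambda>i j. \<Sum>k<n. F k i * F k j) \<le> (\<Sum>i<r. \<Sum>j<r. (a i)^2 * (a j)^2)"
    unfolding dsq_def by (intro sum_mono) auto
  also have "\<dots> = (\<Sum>i<r. (a i)^2)^2"
    by (simp add: power2_eq_square sum_product)
  also have "(\<Sum>i<r. (a i)^2) = (\<Sum>k<n. \<Sum>j<r. (F k j)^2)"
    unfolding a2 by (rule sum.swap)
  finally show ?thesis .
qed

lemma mem_le_sum_list_real:
  fixes g :: "real \<Rightarrow> real"
  assumes "x \<in> set xs" "\<And>y. y \<in> set xs \<Longrightarrow> 0 \<le> g y"
  shows "g x \<le> (\<Sum>y\<leftarrow>xs. g y)"
  using assms
proof (induct xs)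
  case (Cons a xs)
  have "0 \<le> (\<Sum>y\<leftarrow>xs. g y)" using Cons.prems by (intro sum_list_nonneg) auto
  moreover have "x \<noteq> a \<Longrightarrow> g x \<le> (\<Sum>y\<leftarrow>xs. g y)" using Cons by auto
  moreover have "0 \<le> g a" using Cons.prems by auto
  ultimately show ?case
  proof (cases "x = a")
    case True
    thus ?thesis using \<open>0 \<le> (\<Sum>y\<leftarrow>xs. g y)\<close> by simp
  next
    case False
    thus ?thesis using \<open>0 \<le> g a\<close> \<open>x \<noteq> a \<Longrightarrow> g x \<le> (\<Sum>y\<leftarrow>xs. g y)\<close> by simp
  qed
qed simp

lemma sqrt_ratio:
  fixes \<mu> :: real
  assumes "\<bar>\<mu> - 1\<bar> \<le> 1/10"
  shows "(\<mu> - 1)^2 \<le> 421/100 * (sqrt \<mu> - 1)^2"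
proof -
  have m0: "0 \<le> \<mu>" using assms abs_ge_minus_self[of "\<mu> - 1"] by linarith
  have "\<mu> \<le> 441/400" using assms abs_ge_self[of "\<mu> - 1"] by linarith
  hence "sqrt \<mu> \<le> sqrt (441/400)" by (rule real_sqrt_le_mono)
  also have "sqrt (441/400) = 21/20" by (rule real_sqrt_unique) (simp_all add: power2_eq_square)
  finally have s: "sqrt \<mu> \<le> 21/20" .
  have s0: "0 \<le> sqrt \<mu>" using m0 by (rule real_sqrt_ge_zero)
  have ss: "sqrt \<mu> * sqrt \<mu> = \<mu>" using m0 real_sqrt_mult_self[of \<mu>] by linarith
  have gen: "(a - 1) * (a + 1) = a * a - 1" for a :: real by (simp add: algebra_simps)
  have id: "(sqrt \<mu> - 1) * (sqrt \<mu> + 1) = sqrt \<mu> * sqrt \<mu> - 1" by (rule gen)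
  have "(\<mu> - 1)^2 = ((sqrt \<mu> - 1) * (sqrt \<mu> + 1))^2" unfolding id ss ..
  also have "\<dots> = (sqrt \<mu> - 1)^2 * (sqrt \<mu> + 1)^2" by (rule power_mult_distrib)
  also have "\<dots> \<le> (sqrt \<mu> - 1)^2 * (421/100)"
  proof (rule mult_left_mono)
    have "(sqrt \<mu> + 1)^2 \<le> (41/20)^2" using s s0 by (intro power_mono) auto
    also have "(41/20::real)^2 \<le> 421/100" by (simp add: power2_eq_square)
    finally show "(sqrt \<mu> + 1)^2 \<le> 421/100" .
  qed simp
  finally show ?thesis by (simp add: mult.commute)
qed

lemma core:
  fixes F :: "nat \<Rightarrow> nat \<Rightarrow> real" and mus :: "real list" and c f :: real
  assumes rn: "r \<le> n" and r1: "1 \<le> r" and c: "c > 0"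
    and off: "\<And>i j. i < r \<Longrightarrow> j < r \<Longrightarrow> i \<noteq> j \<Longrightarrow> F i j \<ge> 0"
    and fdef: "f = sqrt (\<Sum>k<n. \<Sum>j<r. (F k j)^2)"
    and fc: "f \<le> c * sqrt (dsq r F)"
    and fd: "f \<le> min (1/25) (1/(10*c^2))"
    and eig: "(\<Sum>\<mu>\<leftarrow>mus. (\<mu>-1)^2) = dsq r (\<lambda>i j. F i j + F j i + (\<Sum>k<n. F k i * F k j))"
  shows "sqrt (dsq r F) \<le> 2.1 * sqrt r * sqrt (\<Sum>\<mu>\<leftarrow>mus. (sqrt \<mu> - 1)^2)"
proof -
  define e where "e = sqrt (dsq r F)"
  define G where "G = (\<lambda>i j. (\<Sum>k<n. F k i * F k j))"
  define S where "S = (\<lambda>i j. F i j + F j i)"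
  define N where "N = (\<lambda>i j. S i j + G i j)"
  define T where "T = (\<Sum>\<mu>\<leftarrow>mus. (\<mu>-1)^2)"
  define s2 where "s2 = (\<Sum>\<mu>\<leftarrow>mus. (sqrt \<mu> - 1)^2)"
  have e0: "0 \<le> e" unfolding e_def using dsq_nonneg[of r F] by simp
  have f0: "0 \<le> f" unfolding fdef by (intro real_sqrt_ge_zero sum_nonneg) auto
  have fsq: "f^2 = (\<Sum>k<n. \<Sum>j<r. (F k j)^2)" unfolding fdef by (simp add: sum_nonneg)
  have "dsq r F \<le> (\<Sum>k<n. \<Sum>j<r. (F k j)^2)"
    unfolding dsq_def by (rule sum_mono2) (use rn in \<open>auto intro: sum_nonneg\<close>)
  hence ef: "e \<le> f" unfolding e_def fdef by (rule real_sqrt_le_mono)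
  have gn: "sqrt (dsq r G) \<le> f^2"
  proof -
    have "dsq r G \<le> (f^2)^2" unfolding fsq G_def by (rule dsq_gram)
    hence "sqrt (dsq r G) \<le> sqrt ((f^2)^2)" by (rule real_sqrt_le_mono)
    moreover have "sqrt ((f^2)^2) = f^2" by (rule real_sqrt_unique) auto
    ultimately show ?thesis by linarith
  qed
  have sn_lo: "7/5 * e \<le> sqrt (dsq r S)"
  proof -
    have "2 * dsq r F \<le> dsq r S" unfolding S_def by (rule dsq_sym_lower) (use off in auto)
    moreover have "e^2 = dsq r F" unfolding e_def using dsq_nonneg[of r F] by simp
    moreover have "(7/5 * e)^2 = 49/25 * e^2" by (simp add: power2_eq_square)
    moreover have "0 \<le> e^2" by simp
    ultimately have "(7/5 * e)^2 \<le> dsq r S" by linarith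
    hence "sqrt ((7/5 * e)^2) \<le> sqrt (dsq r S)" by (rule real_sqrt_le_mono)
    thus ?thesis using e0 by simp
  qed
  have sn_hi: "sqrt (dsq r S) \<le> 2 * e"
  proof -
    have "sqrt (dsq r S) \<le> sqrt (dsq r F) + sqrt (dsq r (\<lambda>i j. F j i))"
      unfolding S_def by (rule dsq_tri)
    thus ?thesis unfolding dsq_swap[of r F] e_def by simp
  qed
  have nN_hi: "sqrt (dsq r N) \<le> 2 * e + f^2"
  proof -
    have "sqrt (dsq r N) \<le> sqrt (dsq r S) + sqrt (dsq r G)" unfolding N_def by (rule dsq_tri)
    thus ?thesis using sn_hi gn by linarith
  qed
  have nN_lo: "sqrt (dsq r S) - f^2 \<le> sqrt (dsq r N)"
  proof -
    have "S = (\<lambda>i j. N i j + - G i j)" unfolding N_def by auto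
    hence "sqrt (dsq r S) \<le> sqrt (dsq r N) + sqrt (dsq r (\<lambda>i j. - G i j))" using dsq_tri by metis
    thus ?thesis using gn unfolding dsq_neg[of r G] by linarith
  qed
  have TN: "T = dsq r N" unfolding T_def eig N_def S_def G_def by (simp add: add.assoc)
  have T0: "0 \<le> T" unfolding TN by (rule dsq_nonneg)
  have sqT: "sqrt T ^ 2 = T" using T0 by simp
  have fsmall: "f \<le> 1/25" using fd by simp
  have sqT1: "sqrt T \<le> 1/10"
  proof -
    have "f^2 \<le> (1/25)^2" using f0 fsmall by (intro power_mono) auto
    hence "f^2 \<le> 1/625" by (simp add: power2_eq_square)
    thus ?thesis using nN_hi ef fsmall unfolding TN by linarith
  qed
  have each: "\<bar>\<mu> - 1\<bar> \<le> 1/10" if mu: "\<mu> \<in> set mus" for \<mu>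
  proof -
    have "(\<mu> - 1)^2 \<le> T" unfolding T_def by (rule mem_le_sum_list_real[OF mu]) simp
    hence "sqrt ((\<mu> - 1)^2) \<le> sqrt T" by (rule real_sqrt_le_mono)
    thus ?thesis using sqT1 by simp
  qed
  have Ts: "T \<le> 421/100 * s2"
  proof -
    have "T \<le> (\<Sum>\<mu>\<leftarrow>mus. 421/100 * (sqrt \<mu> - 1)^2)" unfolding T_def
      by (rule sum_list_mono) (rule sqrt_ratio[OF each])
    also have "\<dots> = 421/100 * s2" unfolding s2_def by (rule sum_list_const_mult)
    finally show ?thesis .
  qed
  have s20: "0 \<le> s2" unfolding s2_def by (intro sum_list_nonneg) auto
  have fce: "f^2 \<le> (c * e)^2" using fc f0 unfolding e_def by (intro power_mono) auto
  have ce: "c^2 * e \<le> 1/10"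
  proof -
    have "e \<le> 1/(10*c^2)" using ef fd by simp
    hence "c^2 * e \<le> c^2 * (1/(10*c^2))" using c by (intro mult_left_mono) auto
    thus ?thesis using c by simp
  qed
  have ce2: "(c * e)^2 = (c^2 * e) * e" by (simp add: power2_eq_square)
  have ce3: "(c^2 * e) * e \<le> (1/10) * e" by (rule mult_right_mono[OF ce e0])
  have "f^2 \<le> 1/10 * e" using fce ce2 ce3 by linarith
  hence lo: "13/10 * e \<le> sqrt T" using nN_lo sn_lo unfolding TN by linarith
  have "(13/10 * e)^2 \<le> (sqrt T)^2" using lo e0 by (intro power_mono) auto
  moreover have "(13/10 * e)^2 = 169/100 * e^2" by (simp add: power2_eq_square)
  ultimately have "169/100 * e^2 \<le> T" using sqT by linarith
  hence "e^2 \<le> 441/100 * s2" using Ts s20 by linarith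
  moreover have "s2 \<le> real r * s2" using mult_right_mono[of 1 "real r" s2] r1 s20 by simp
  ultimately have "e^2 \<le> 441/100 * real r * s2" by linarith
  hence "sqrt (e^2) \<le> sqrt (441/100 * real r * s2)" by (rule real_sqrt_le_mono)
  also have "sqrt (441/100 * real r * s2) = 2.1 * sqrt r * sqrt s2"
  proof -
    have "sqrt (441/100) = 2.1" by (rule real_sqrt_unique) (simp_all add: power2_eq_square)
    moreover have "sqrt (441/100 * real r * s2) = sqrt (441/100) * sqrt (real r) * sqrt s2"
      by (simp only: real_sqrt_mult)
    ultimately show ?thesis by simp
  qed
  finally show ?thesis using e0 unfolding e_def s2_def by simp
qed

lemma sum_list_sorted_mset: "(\<Sum>x\<leftarrow>sorted_list_of_multiset A. g x) = (\<Sum>x\<in>#A. (g x :: real))"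
proof -
  have "(\<Sum>x\<leftarrow>sorted_list_of_multiset A. g x) = sum_mset (mset (map g (sorted_list_of_multiset A)))"
    by (rule sum_mset_sum_list[symmetric])
  also have "\<dots> = (\<Sum>x\<in>#A. g x)" by simp
  finally show ?thesis .
qed

lemma sigma_dist_eq:
  assumes cp: "char_poly (transpose_mat X * X) = (\<Prod>\<mu>\<leftarrow>mus. [:-\<mu>,1:])"
  shows "sigma_dist X = sqrt (\<Sum>\<mu>\<leftarrow>mus. (sqrt \<mu> - 1)^2)"
proof -
  have "sigma_dist X = sqrt (\<Sum>x\<leftarrow>sorted_list_of_multiset (image_mset sqrt (mset mus)). (x - 1)^2)"
    unfolding sigma_dist_def vec_norm_def singular_values_def cp proots_lin_prod
    by (simp add: rev_map[symmetric] sum_list_rev o_def)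
  also have "(\<Sum>x\<leftarrow>sorted_list_of_multiset (image_mset sqrt (mset mus)). (x - 1)^2)
      = (\<Sum>x\<in># image_mset sqrt (mset mus). (x - 1)^2)" by (rule sum_list_sorted_mset)
  also have "\<dots> = (\<Sum>\<mu>\<leftarrow>mus. (sqrt \<mu> - 1)^2)"
    by (simp add: sum_mset_sum_list[symmetric] image_mset.compositionality o_def)
  finally show ?thesis .
qed

lemma frob_full:
  assumes X: "X \<in> carrier_mat n r"
  shows "frob_norm (X - rect_id n r) = sqrt (\<Sum>k<n. \<Sum>j<r. (X $$ (k,j) - (if k = j then 1 else 0))^2)"
  unfolding frob_norm_def rect_id_def using X
  by (intro arg_cong[where f = sqrt] sum.cong refl) auto

lemma frob_top:
  assumes X: "X \<in> carrier_mat n r"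
  shows "frob_norm (top_block r X - 1\<^sub>m r) = sqrt (dsq r (\<lambda>i j. X $$ (i,j) - (if i = j then 1 else 0)))"
  unfolding frob_norm_def top_block_def dsq_def using X
  by (intro arg_cong[where f = sqrt] sum.cong refl) auto

lemma top_nonneg:
  assumes X: "X \<in> carrier_mat n r" and nn: "entrywise_nonneg (top_block r X)" and i: "i < r" and j: "j < r"
  shows "X $$ (i,j) \<ge> 0"
  using nn i j X unfolding entrywise_nonneg_def top_block_def by auto

lemma gram_entry:
  assumes X: "X \<in> carrier_mat n r" and i: "i < r" and j: "j < r"
  shows "(transpose_mat X * X) $$ (i,j) = (\<Sum>k<n. X $$ (k,i) * X $$ (k,j))"
  using X i j by (simp add: index_mult_mat scalar_prod_def lessThan_atLeast0)

lemma gram_shift: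
  fixes X :: "real mat"
  assumes X: "X \<in> carrier_mat n r" and rn: "r \<le> n" and i: "i < r" and j: "j < r"
  defines "F \<equiv> (\<lambda>a b. X $$ (a,b) - (if a = b then 1 else 0))"
  shows "(transpose_mat X * X) $$ (i,j) - (if i = j then 1 else 0) = F i j + F j i + (\<Sum>k<n. F k i * F k j)"
proof -
  have in_: "i < n" "j < n" using i j rn by auto
  have "(\<Sum>k<n. X $$ (k,i) * X $$ (k,j)) = (\<Sum>k<n. F k i * F k j + (if k = i then F k j else 0) + (if k = j then F k i else 0) + (if k = i \<and> k = j then 1 else 0))"
    by (intro sum.cong refl) (auto simp: F_def algebra_simps)
  also have "\<dots> = (\<Sum>k<n. F k i * F k j) + F i j + F j i + (if i = j then 1 else 0)"
  proof -
    have d1: "(\<Sum>k<n. if k = i then F k j else 0) = F i j" using in_ by simp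
    have d2: "(\<Sum>k<n. if k = j then F k i else 0) = F j i" using in_ by simp
    have d3: "(\<Sum>k<n. if k = i \<and> k = j then (1::real) else 0) = (if i = j then 1 else 0)"
      using in_ by (cases "i = j") simp_all
    show ?thesis by (simp only: sum.distrib d1 d2 d3)
  qed
  finally show ?thesis using gram_entry[OF X i j] by simp
qed
theorem lemma3p1:
  fixes n r :: nat and c :: real
  assumes "1 \<le> r" and "r \<le> n" and "c > 0"
  shows "\<exists>\<delta>>0. \<forall>X \<in> L_set n r c.
           frob_norm (X - rect_id n r) \<le> \<delta> \<longrightarrow>
           frob_norm (top_block r X - 1\<^sub>m r) \<le> 2.1 * sqrt (real r) * sigma_dist X"
proof (intro exI[of _ "min (1/25) (1/(10*c^2))"] conjI ballI impI)
  show "0 < min (1/25) (1/(10*c^2))" using assms(3) by simp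
  fix X assume XL: "X \<in> L_set n r c" and small: "frob_norm (X - rect_id n r) \<le> min (1/25) (1/(10*c^2))"
  from XL have X: "X \<in> carrier_mat n r" and nn: "entrywise_nonneg (top_block r X)"
    and lc: "frob_norm (X - rect_id n r) \<le> c * frob_norm (top_block r X - 1\<^sub>m r)"
    unfolding L_set_def by auto
  define F where "F = (\<lambda>a b. X $$ (a,b) - (if a = b then (1::real) else 0))"
  define M where "M = transpose_mat X * X"
  have M: "M \<in> carrier_mat r r" unfolding M_def using X by simp
  have sym: "M $$ (i,j) = M $$ (j,i)" if "i < r" "j < r" for i j
    unfolding M_def using gram_entry[OF X that] gram_entry[OF X that(2,1)] by (simp add: mult.commute)
  obtain mus where cp: "char_poly M = (\<Prod>\<mu>\<leftarrow>mus. [:-\<mu>,1:])"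
    using sym_real_split[OF M sym] by auto
  have eig0: "(\<Sum>\<mu>\<leftarrow>mus. (\<mu>-1)^2) = (\<Sum>i<r. \<Sum>j<r. (M $$ (i,j) - (if i = j then 1 else 0))^2)"
    by (rule eig_trace_identity[OF M sym cp])
  also have "\<dots> = dsq r (\<lambda>i j. F i j + F j i + (\<Sum>k<n. F k i * F k j))"
  proof -
    have gs: "M $$ (i,j) - (if i = j then 1 else 0) = F i j + F j i + (\<Sum>k<n. F k i * F k j)"
      if "i \<in> {..<r}" "j \<in> {..<r}" for i j
      unfolding M_def F_def by (rule gram_shift[OF X assms(2)]) (use that in auto)
    show ?thesis unfolding dsq_def by (intro sum.cong refl) (simp only: gs)
  qed
  finally have eig: "(\<Sum>\<mu>\<leftarrow>mus. (\<mu>-1)^2) = dsq r (\<lambda>i j. F i j + F j i + (\<Sum>k<n. F k i * F k j))" .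
  have off: "F i j \<ge> 0" if "i < r" "j < r" "i \<noteq> j" for i j
    unfolding F_def using top_nonneg[OF X nn that(1,2)] that(3) by simp
  have ff: "frob_norm (X - rect_id n r) = sqrt (\<Sum>k<n. \<Sum>j<r. (F k j)^2)"
    unfolding F_def by (rule frob_full[OF X])
  have ft: "frob_norm (top_block r X - 1\<^sub>m r) = sqrt (dsq r F)"
    unfolding F_def by (rule frob_top[OF X])
  have "sqrt (dsq r F) \<le> 2.1 * sqrt r * sqrt (\<Sum>\<mu>\<leftarrow>mus. (sqrt \<mu> - 1)^2)"
    by (rule core[OF assms(2,1,3) off ff]) (use lc ft small eig in auto)
  thus "frob_norm (top_block r X - 1\<^sub>m r) \<le> 2.1 * sqrt (real r) * sigma_dist X"
    unfolding ft sigma_dist_eq[OF cp[unfolded M_def]] .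
qed

end
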